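(* Let $g(x)=(x+1)\ln(x+1)-x\ln x$ (entropy in nats of a thermal state with mean photon number $x$). For $\eta\in[1/2,1)$ and $N_S>0$ with $(1-\eta)N_S\ge 2$, \[ g(\eta N_S)-g((1-\eta)N_S)\ge \ln\eta-\ln(1-\eta)-\frac{1}{\eta(1-\eta)N_S}. \] Consequently, for $\epsilon>0$, choosing the photon-number-sharing parameter $\lambda=1/[\eta(1-\eta)\epsilon N_S\ln 2]$, whenever $\lambda(1-\eta)N_S\ge 2$ and $\eta\ge 1-\eta$, gives a quantum communication rate $g_2(\lambda\eta N_S)-g_2(\lambda(1-\eta)N_S)$ (in qubits per channel use) that is within $\epsilon$ of $\log_2\eta-\log_2(1-\eta)$, i.e. \[ g_2(\lambda\eta N_S)-g_2(\lambda(1-\eta)N_S)\ge \log_2\eta-\log_2(1-\eta)-\epsilon, \] where $g_2(x)=(x+1)\log_2(x+1)-x\log_2 x$.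
   Context: $\log_2\eta-\log_2(1-\eta)$ is the high-photon-number limit of the quantum communication rate $g_2(\eta N)-g_2((1-\eta)N)$ of a pure-loss bosonic channel with transmissivity $\eta$ and mean input photon number $N$. The photon-number-sharing parameter $\lambda$ is the fraction of the available mean photon number $N_S$ dedicated to quantum communication in a trade-off code. *)

theory Defs
  imports Complex_Main
begin

definition g :: "real \<Rightarrow> real" where
  "g x = (x + 1) * ln (x + 1) - x * ln x"

definition g2 :: "real \<Rightarrow> real" where
  "g2 x = (x + 1) * log 2 (x + 1) - x * log 2 x"

end

theory Submission
  imports Defs
begin

lemma g_bounds:
  fixes x :: real assumes x: "0 < x"
  shows "ln x + 1 \<le> g x" "g x \<le> ln x + 1 + 1/x"
proof -
  define d where "d = ln (x+1) - ln x"
  have eq: "g x = ln x + (x+1) * d" unfolding g_def d_def by (simp add: algebra_simps)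
  have "ln (x/(x+1)) \<le> x/(x+1) - 1" using x by (intro ln_le_minus_one) auto
  hence "ln x - ln (x+1) \<le> -1/(x+1)" using x by (simp add: ln_div field_simps)
  hence d1: "d \<ge> 1/(x+1)" unfolding d_def by simp
  have "ln ((x+1)/x) \<le> (x+1)/x - 1" using x by (intro ln_le_minus_one) auto
  hence d2: "d \<le> 1/x" using x unfolding d_def by (simp add: ln_div field_simps)
  have "(x+1) * d \<ge> (x+1) * (1/(x+1))" using d1 x by (intro mult_left_mono) auto
  hence "(x+1)*d \<ge> 1" using x by simp
  thus "ln x + 1 \<le> g x" using eq by simp
  have "(x+1) * d \<le> (x+1) * (1/x)" using d2 x by (intro mult_left_mono) auto
  hence "(x+1)*d \<le> 1 + 1/x" using x by (simp add: field_simps)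
  thus "g x \<le> ln x + 1 + 1/x" using eq by simp
qed

lemma part1:
  fixes \<eta> N :: real
  assumes "1/2 \<le> \<eta>" "\<eta> < 1" "0 < N" "(1 - \<eta>) * N \<ge> 2"
  shows "g (\<eta> * N) - g ((1 - \<eta>) * N) \<ge> ln \<eta> - ln (1 - \<eta>) - 1 / (\<eta> * (1 - \<eta>) * N)"
proof -
  have p1: "0 < \<eta> * N" "0 < (1-\<eta>)*N" using assms by auto
  have a: "g (\<eta>*N) \<ge> ln (\<eta>*N) + 1" using g_bounds(1)[OF p1(1)] .
  have b: "g ((1-\<eta>)*N) \<le> ln ((1-\<eta>)*N) + 1 + 1/((1-\<eta>)*N)" using g_bounds(2)[OF p1(2)] .
  have l: "ln (\<eta>*N) - ln ((1-\<eta>)*N) = ln \<eta> - ln (1-\<eta>)" using assms by (simp add: ln_mult)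
  have "1/((1-\<eta>)*N) \<le> 1 / (\<eta> * (1 - \<eta>) * N)"
  proof -
    have "0 < \<eta> * (1 - \<eta>) * N" using assms by simp
    moreover have "\<eta> * (1 - \<eta>) * N \<le> (1-\<eta>)*N" using assms p1 by (simp add: mult_le_cancel_right1)
    ultimately show ?thesis using assms by (intro divide_left_mono) auto
  qed
  thus ?thesis using a b l by linarith
qed

theorem proposition3:
  shows "(\<forall>(\<eta>::real) (N::real). 1/2 \<le> \<eta> \<and> \<eta> < 1 \<and> 0 < N \<and> (1 - \<eta>) * N \<ge> 2 \<longrightarrow>
           g (\<eta> * N) - g ((1 - \<eta>) * N) \<ge> ln \<eta> - ln (1 - \<eta>) - 1 / (\<eta> * (1 - \<eta>) * N)) \<and>
         (\<forall>(\<eta>::real) (N::real) (\<epsilon>::real) (lam::real).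
           0 < \<eta> \<and> \<eta> < 1 \<and> 0 < N \<and> 0 < \<epsilon> \<and>
           lam = 1 / (\<eta> * (1 - \<eta>) * \<epsilon> * N * ln 2) \<and>
           lam * (1 - \<eta>) * N \<ge> 2 \<and> \<eta> \<ge> 1 - \<eta> \<longrightarrow>
           g2 (lam * \<eta> * N) - g2 (lam * (1 - \<eta>) * N) \<ge> log 2 \<eta> - log 2 (1 - \<eta>) - \<epsilon>)"
proof (intro conjI allI impI)
  fix \<eta> N :: real
  assume "1/2 \<le> \<eta> \<and> \<eta> < 1 \<and> 0 < N \<and> (1 - \<eta>) * N \<ge> 2"
  thus "g (\<eta> * N) - g ((1 - \<eta>) * N) \<ge> ln \<eta> - ln (1 - \<eta>) - 1 / (\<eta> * (1 - \<eta>) * N)"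
    using part1 by blast
next
  fix \<eta> N \<epsilon> lam :: real
  assume h: "0 < \<eta> \<and> \<eta> < 1 \<and> 0 < N \<and> 0 < \<epsilon> \<and>
           lam = 1 / (\<eta> * (1 - \<eta>) * \<epsilon> * N * ln 2) \<and>
           lam * (1 - \<eta>) * N \<ge> 2 \<and> \<eta> \<ge> 1 - \<eta>"
  have l2: "ln 2 > (0::real)" by simp
  have lp: "lam > 0" using h l2 by simp
  define M where "M = lam * N"
  have M: "0 < M" using lp h unfolding M_def by (simp add: algebra_simps)
  have P: "g (\<eta> * M) - g ((1 - \<eta>) * M) \<ge> ln \<eta> - ln (1 - \<eta>) - 1 / (\<eta> * (1 - \<eta>) * M)"
  proof (rule part1)
    show "1/2 \<le> \<eta>" "\<eta> < 1" "0 < M" using h M by auto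
    have "lam * (1 - \<eta>) * N \<ge> 2" using h by blast
    moreover have "(1 - \<eta>) * M = lam * (1 - \<eta>) * N" unfolding M_def by (simp add: algebra_simps)
    ultimately show "(1 - \<eta>) * M \<ge> 2" by linarith
  qed
  have e: "1 / (\<eta> * (1 - \<eta>) * M) = \<epsilon> * ln 2"
    using h l2 unfolding M_def by (simp add: field_simps)
  have g2g: "\<And>x. g2 x = g x / ln 2" unfolding g2_def g_def log_def by (simp add: field_simps)
  have "g2 (lam * \<eta> * N) - g2 (lam * (1 - \<eta>) * N) = (g (\<eta> * M) - g ((1 - \<eta>) * M)) / ln 2"
    unfolding g2g M_def by (simp add: algebra_simps diff_divide_distrib)
  also have "\<dots> \<ge> (ln \<eta> - ln (1 - \<eta>) - \<epsilon> * ln 2) / ln 2"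
    using P e l2 by (intro divide_right_mono) auto
  finally show "g2 (lam * \<eta> * N) - g2 (lam * (1 - \<eta>) * N) \<ge> log 2 \<eta> - log 2 (1 - \<eta>) - \<epsilon>"
    using l2 by (simp add: log_def diff_divide_distrib)
qed

end
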